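(* Let $F:\mathbb{R}^d\to[0,\infty)$ be differentiable and $\mu$-strongly convex ($\mu>0$), let $\lambda_t>0$, $\epsilon_t\in[0,1)$, and $x_{t-1}\in\mathbb{R}^d$. Let $F_{\lambda_t,x_{t-1}}(x)=F(x)+\lambda_t\|x-x_{t-1}\|_2^2$ with unique minimizer $x^\star_{\lambda_t,x_{t-1}}$, and let $x_t\in\mathbb{R}^d$ satisfy $F_{\lambda_t,x_{t-1}}(x_t)\le(1+\epsilon_t)F_{\lambda_t,x_{t-1}}(x^\star_{\lambda_t,x_{t-1}})$. Let $r_t^\star=\|x_{t-1}-x^\star_{\lambda_t,x_{t-1}}\|_2$. Then $$\|x_t-x_{t-1}\|_2\le\sqrt{\frac{2\epsilon_t}{2\lambda_t+\mu}F(x_{t-1})}+\frac{\|\nabla F(x_{t-1})\|_2}{2\lambda_t+\mu}$$ and $$\|x_t-x_{t-1}\|_2\ge r_t^\star-\sqrt{\frac{2\epsilon_t}{2\lambda_t+\mu}F(x_{t-1})}.$$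
   Context: $F$ is $\mu$-strongly convex if $F(u)\ge F(v)+\langle\nabla F(v),u-v\rangle+\frac\mu2\|u-v\|_2^2$ for all $u,v$. *)

theory Defs
  imports "HOL-Analysis.Analysis"
begin

end

theory Submission
  imports Defs
begin

theorem corollaryC1:
  fixes F :: "real ^ 'd \<Rightarrow> real"
    and gradF :: "real ^ 'd \<Rightarrow> real ^ 'd"
    and \<mu> lam \<epsilon> :: real
    and xprev xstar xt :: "real ^ 'd"
  assumes nonneg: "\<And>x. F x \<ge> 0"
    and grad: "\<And>x. (F has_derivative (\<lambda>h. gradF x \<bullet> h)) (at x)"
    and mu_pos: "\<mu> > 0"
    and strong: "\<And>u v. F u \<ge> F v + gradF v \<bullet> (u - v) + \<mu> / 2 * (norm (u - v))\<^sup>2"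
    and lam_pos: "lam > 0"
    and eps: "0 \<le> \<epsilon>" "\<epsilon> < 1"
    and xstar_min: "\<And>x. F xstar + lam * (norm (xstar - xprev))\<^sup>2 \<le> F x + lam * (norm (x - xprev))\<^sup>2"
    and xt_approx: "F xt + lam * (norm (xt - xprev))\<^sup>2 \<le> (1 + \<epsilon>) * (F xstar + lam * (norm (xstar - xprev))\<^sup>2)"
  shows "norm (xt - xprev) \<le> sqrt (2 * \<epsilon> / (2 * lam + \<mu>) * F xprev) + norm (gradF xprev) / (2 * lam + \<mu>)
     \<and> norm (xt - xprev) \<ge> norm (xprev - xstar) - sqrt (2 * \<epsilon> / (2 * lam + \<mu>) * F xprev)"
proof -
  define G where "G x = F x + lam * ((x - xprev) \<bullet> (x - xprev))" for x
  have Geq: "G x = F x + lam * (norm (x - xprev))\<^sup>2" for x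
    unfolding G_def by (simp add: power2_norm_eq_inner)
  have dG: "(G has_derivative (\<lambda>h. gradF xstar \<bullet> h + lam * (h \<bullet> (xstar - xprev) + (xstar - xprev) \<bullet> h))) (at xstar)"
    unfolding G_def
    by (auto intro!: derivative_eq_intros grad)
  have "(\<lambda>h. gradF xstar \<bullet> h + lam * (h \<bullet> (xstar - xprev) + (xstar - xprev) \<bullet> h)) = (\<lambda>v. 0)"
    by (rule differential_zero_maxmin[OF _ open_UNIV dG]) (use xstar_min Geq in auto)
  then have hz: "\<And>h. gradF xstar \<bullet> h + lam * (h \<bullet> (xstar - xprev) + (xstar - xprev) \<bullet> h) = 0"
    by meson
  have "\<And>h. (gradF xstar + (2*lam) *\<^sub>R (xstar - xprev)) \<bullet> h = 0"
  proof -
    fix h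
    have "(gradF xstar + (2*lam) *\<^sub>R (xstar - xprev)) \<bullet> h = gradF xstar \<bullet> h + lam * (h \<bullet> (xstar - xprev) + (xstar - xprev) \<bullet> h)"
      by (simp add: inner_add_left inner_commute[of h])
    then show "(gradF xstar + (2*lam) *\<^sub>R (xstar - xprev)) \<bullet> h = 0" using hz[of h] by simp
  qed
  from this[of "gradF xstar + (2*lam) *\<^sub>R (xstar - xprev)"]
  have g0: "gradF xstar = - (2*lam) *\<^sub>R (xstar - xprev)"
    by (simp add: eq_neg_iff_add_eq_0)
  define m where "m = 2*lam + \<mu>"
  have mpos: "m > 0" using mu_pos lam_pos m_def by simp
  have Gsc: "G x \<ge> G xstar + m/2 * (norm (x - xstar))\<^sup>2" for x
  proof -
    have s: "F x \<ge> F xstar + gradF xstar \<bullet> (x - xstar) + \<mu>/2 * (norm (x - xstar))\<^sup>2" by (rule strong)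
    have id: "(x - xprev) \<bullet> (x - xprev) = (xstar - xprev) \<bullet> (xstar - xprev) + 2 * ((xstar - xprev) \<bullet> (x - xstar)) + (x - xstar) \<bullet> (x - xstar)"
      by (simp add: inner_diff_left inner_diff_right inner_commute algebra_simps)
    have "gradF xstar \<bullet> (x - xstar) = - (2*lam) * ((xstar - xprev) \<bullet> (x - xstar))"
      by (simp add: g0)
    then have s': "F x \<ge> F xstar - (2*lam) * ((xstar - xprev) \<bullet> (x - xstar)) + \<mu>/2 * ((x - xstar) \<bullet> (x - xstar))"
      using s by (simp add: power2_norm_eq_inner)
    have "G x = F x + lam * ((xstar - xprev) \<bullet> (xstar - xprev)) + 2*lam * ((xstar - xprev) \<bullet> (x - xstar)) + lam * ((x - xstar) \<bullet> (x - xstar))"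
      unfolding G_def id by (simp add: algebra_simps)
    moreover have "G xstar = F xstar + lam * ((xstar - xprev) \<bullet> (xstar - xprev))" unfolding G_def by simp
    moreover have "(norm (x - xstar))\<^sup>2 = (x - xstar) \<bullet> (x - xstar)" by (simp add: power2_norm_eq_inner)
    moreover have "\<And>Gx Gs Fx Fs a b c n::real. Gx = Fx + lam*a + 2*lam*b + lam*c \<Longrightarrow> Gs = Fs + lam*a \<Longrightarrow> n = c
       \<Longrightarrow> Fx \<ge> Fs - 2*lam*b + \<mu>/2*c \<Longrightarrow> Gs + m/2*n \<le> Gx"
      unfolding m_def by (simp add: field_simps)
    ultimately show ?thesis using s' by blast
  qed
  define r where "r = sqrt (2 * \<epsilon> / m * F xprev)"
  have Gprev: "G xprev = F xprev" unfolding G_def by simp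
  have GxsF: "G xstar \<le> F xprev" using xstar_min[of xprev] Geq by simp
  have Gxs0: "G xstar \<ge> 0" unfolding Geq using nonneg[of xstar] lam_pos by simp
  have "m/2 * (norm (xt - xstar))\<^sup>2 \<le> G xt - G xstar" using Gsc[where x=xt] by simp
  also have "\<dots> \<le> \<epsilon> * G xstar" using xt_approx Geq by (simp add: algebra_simps)
  also have "\<dots> \<le> \<epsilon> * F xprev" using GxsF eps by (simp add: mult_left_mono)
  finally have "(norm (xt - xstar))\<^sup>2 \<le> 2 * \<epsilon> / m * F xprev" using mpos
    by (simp add: field_simps)
  then have dt: "norm (xt - xstar) \<le> r" unfolding r_def
    by (metis norm_ge_zero real_le_rsqrt)
  define d where "d = xstar - xprev"
  have s1: "F xstar \<ge> F xprev + gradF xprev \<bullet> d + \<mu>/2 * (norm d)\<^sup>2" unfolding d_def by (rule strong)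
  have s2: "F xprev \<ge> F xstar + gradF xstar \<bullet> (-d) + \<mu>/2 * (norm d)\<^sup>2" using strong[where u=xprev and v=xstar] unfolding d_def
    by (simp add: norm_minus_commute)
  have "gradF xstar \<bullet> (-d) = 2*lam * (norm d)^2" proof -
    have "gradF xstar = - (2*lam) *\<^sub>R d" using g0 d_def by simp
    then show ?thesis by (simp add: power2_norm_eq_inner)
  qed
  with s1 s2 have "m * (norm d)^2 \<le> - (gradF xprev \<bullet> d)" unfolding m_def by (simp add: algebra_simps)
  also have "\<dots> \<le> norm (gradF xprev) * norm d"
    by (metis Cauchy_Schwarz_ineq2 abs_le_iff inner_minus_right minus_le_iff norm_minus_cancel)
  finally have md: "m * (norm d)^2 \<le> norm (gradF xprev) * norm d" .
  then have dd: "norm d \<le> norm (gradF xprev) / m"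
  proof (cases "norm d = 0")
    case True then show ?thesis using mpos by simp
  next
    case False
    then have "norm d > 0" by simp
    with md have "m * norm d \<le> norm (gradF xprev)"
      by (simp add: power2_eq_square)
    then show ?thesis using mpos by (simp add: field_simps)
  qed
  have "norm (xt - xprev) \<le> norm (xt - xstar) + norm d"
    unfolding d_def using norm_triangle_ineq[of "xt - xstar" "xstar - xprev"] by simp
  then have A: "norm (xt - xprev) \<le> r + norm (gradF xprev) / m" using dt dd by simp
  have "norm (xprev - xstar) \<le> norm (xprev - xt) + norm (xt - xstar)"
    by (rule norm_triangle_sub[of "xprev - xstar" "xt - xstar", simplified, THEN order_trans]) (simp add: norm_minus_commute)
  then have B: "norm (xt - xprev) \<ge> norm (xprev - xstar) - r" using dt by (simp add: norm_minus_commute)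
  show ?thesis using A B unfolding r_def m_def by simp
qed

end
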